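(* Let $\alpha(\lambda)=\prod_{k=1}^R(\lambda-\alpha_k)$ be a monic polynomial of degree $R$. Then the separate states associated with $\alpha$ satisfy $$\langle\alpha|=(-1)^{RN}\langle1|\prod_{k=1}^RD(\alpha_k),\qquad |\alpha\rangle=(-1)^{RN}\prod_{k=1}^RD(\alpha_k)|1\rangle,$$ where $\langle1|$ and $|1\rangle$ are the separate states associated with the constant function $1$.
   Context: Fix $N\ge1$, nonzero $\eta\in\mathbb C$ and $\xi_1,\dots,\xi_N\in\mathbb C$ with $\xi_a\neq\xi_b$, $\xi_a\ne\xi_b\pm\eta$ for $a\ne b$. Let $\mathbb V=\bigotimes_{n=1}^NV_n$, $V_n\cong\mathbb C^2$. Let $R(\lambda)$ be the $4\times4$ matrix with rows $(\lambda+\eta,0,0,0),(0,\lambda,\eta,0),(0,\eta,\lambda,0),(0,0,0,\lambda+\eta)$ and $T_0(\lambda)=R_{0N}(\lambda-\xi_N)\cdots R_{01}(\lambda-\xi_1)$ on $V_0\otimes\mathbb V$, written in the auxiliary space $V_0\cong\mathbb C^2$ as the $2\times2$ matrix with entries $A(\lambda),B(\lambda)$ (first row), $C(\lambda),D(\lambda)$ (second row). Put $a(\lambda)=\prod_n(\lambda-\xi_n+\eta)$, $d(\lambda)=\prod_n(\lambda-\xi_n)$. Let $|0\rangle=\bigotimes_n(1,0)^T$ and $\langle0|=\bigotimes_n(1,0)$. For complex numbers $x_1,\dots,x_M$ let $V(x_1,\dots,x_M)=\prod_{1\le b<a\le M}(x_a-x_b)$ and $V(\{\xi\})=V(\xi_1,\dots,\xi_N)$.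 For $\mathbf h\in\{0,1\}^N$ put $|\mathbf h\rangle=V(\{\xi\})^{-1}\prod_n(B(\xi_n)/a(\xi_n))^{h_n}|0\rangle$ and $\langle\mathbf h|=V(\{\xi\})^{-1}\langle0|\prod_n(C(\xi_n)/d(\xi_n-\eta))^{h_n}$. For functions $\alpha,\beta$ on $\mathbb C$ the separate states are $\langle\alpha|=\sum_{\mathbf h\in\{0,1\}^N}\prod_{a=1}^N\alpha(\xi_a-h_a\eta)\,V(\xi_1-h_1\eta,\dots,\xi_N-h_N\eta)\langle\mathbf h|$ and $|\beta\rangle=\sum_{\mathbf h}\prod_{a=1}^N\beta(\xi_a-h_a\eta)\,V(\xi_1+h_1\eta,\dots,\xi_N+h_N\eta)|\mathbf h\rangle$. *)

theory Defs
  imports Complex_Main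
begin

text \<open>Basis configurations of the quantum space V = V_1 (x) ... (x) V_N, V_n = C^2:
  a configuration s assigns to each site n in {1..N} the basis index s n in {0,1}
  (0 = (1,0)^T, 1 = (0,1)^T), and is 0 outside {1..N}.\<close>

type_synonym cfg = "nat \<Rightarrow> nat"
type_synonym 'i op = "'i \<Rightarrow> 'i \<Rightarrow> complex"

definition cfgs :: "nat \<Rightarrow> cfg set" where
  "cfgs N = {s. (\<forall>n. s n \<le> 1) \<and> (\<forall>n. n \<notin> {1..N} \<longrightarrow> s n = 0)}"

text \<open>Basis of V_0 (x) V: auxiliary index a in {0,1} together with a configuration.\<close>
definition auxcfgs :: "nat \<Rightarrow> (nat \<times> cfg) set" where
  "auxcfgs N = {0, 1} \<times> cfgs N"

definition idm :: "'i op" where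
  "idm i j = (if i = j then 1 else 0)"

definition mmul :: "'i set \<Rightarrow> 'i op \<Rightarrow> 'i op \<Rightarrow> 'i op" where
  "mmul I P Q = (\<lambda>i k. \<Sum>j\<in>I. P i j * Q j k)"

definition mvec :: "'i set \<Rightarrow> 'i op \<Rightarrow> ('i \<Rightarrow> complex) \<Rightarrow> 'i \<Rightarrow> complex" where
  "mvec I P v = (\<lambda>i. \<Sum>j\<in>I. P i j * v j)"

definition vecm :: "'i set \<Rightarrow> ('i \<Rightarrow> complex) \<Rightarrow> 'i op \<Rightarrow> 'i \<Rightarrow> complex" where
  "vecm I v P = (\<lambda>j. \<Sum>i\<in>I. v i * P i j)"

fun oprod :: "'i set \<Rightarrow> (nat \<Rightarrow> 'i op) \<Rightarrow> nat \<Rightarrow> 'i op" where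
  "oprod I F 0 = idm"
| "oprod I F (Suc n) = mmul I (oprod I F n) (F (Suc n))"

text \<open>The R-matrix, rows as in the paper, basis of C^2 (x) C^2 ordered
  (0,0),(0,1),(1,0),(1,1), i.e. (a,b) has index 2a+b.\<close>
definition Rrows :: "complex \<Rightarrow> complex \<Rightarrow> complex list list" where
  "Rrows \<eta> l = [[l + \<eta>, 0, 0, 0], [0, l, \<eta>, 0], [0, \<eta>, l, 0], [0, 0, 0, l + \<eta>]]"

definition Rmat :: "complex \<Rightarrow> complex \<Rightarrow> (nat \<times> nat) \<Rightarrow> (nat \<times> nat) \<Rightarrow> complex" where
  "Rmat \<eta> l ab cd = Rrows \<eta> l ! (2 * fst ab + snd ab) ! (2 * fst cd + snd cd)"

definition R0n :: "complex \<Rightarrow> nat \<Rightarrow> complex \<Rightarrow> (nat \<times> cfg) op" where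
  "R0n \<eta> n mu = (\<lambda>(a, s) (c, t).
     if (\<forall>m. m \<noteq> n \<longrightarrow> s m = t m) then Rmat \<eta> mu (a, s n) (c, t n) else 0)"

fun Tpart :: "nat \<Rightarrow> complex \<Rightarrow> (nat \<Rightarrow> complex) \<Rightarrow> complex \<Rightarrow> nat \<Rightarrow> (nat \<times> cfg) op" where
  "Tpart N \<eta> \<xi> l 0 = idm"
| "Tpart N \<eta> \<xi> l (Suc k) = mmul (auxcfgs N) (R0n \<eta> (Suc k) (l - \<xi> (Suc k))) (Tpart N \<eta> \<xi> l k)"

definition Tmon :: "nat \<Rightarrow> complex \<Rightarrow> (nat \<Rightarrow> complex) \<Rightarrow> complex \<Rightarrow> (nat \<times> cfg) op" where
  "Tmon N \<eta> \<xi> l = Tpart N \<eta> \<xi> l N"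

definition Aop :: "nat \<Rightarrow> complex \<Rightarrow> (nat \<Rightarrow> complex) \<Rightarrow> complex \<Rightarrow> cfg op" where
  "Aop N \<eta> \<xi> l = (\<lambda>s t. Tmon N \<eta> \<xi> l (0, s) (0, t))"
definition Bop :: "nat \<Rightarrow> complex \<Rightarrow> (nat \<Rightarrow> complex) \<Rightarrow> complex \<Rightarrow> cfg op" where
  "Bop N \<eta> \<xi> l = (\<lambda>s t. Tmon N \<eta> \<xi> l (0, s) (1, t))"
definition Cop :: "nat \<Rightarrow> complex \<Rightarrow> (nat \<Rightarrow> complex) \<Rightarrow> complex \<Rightarrow> cfg op" where
  "Cop N \<eta> \<xi> l = (\<lambda>s t. Tmon N \<eta> \<xi> l (1, s) (0, t))"
definition Dop :: "nat \<Rightarrow> complex \<Rightarrow> (nat \<Rightarrow> complex) \<Rightarrow> complex \<Rightarrow> cfg op" where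
  "Dop N \<eta> \<xi> l = (\<lambda>s t. Tmon N \<eta> \<xi> l (1, s) (1, t))"

definition afun :: "nat \<Rightarrow> complex \<Rightarrow> (nat \<Rightarrow> complex) \<Rightarrow> complex \<Rightarrow> complex" where
  "afun N \<eta> \<xi> l = (\<Prod>n\<in>{1..N}. l - \<xi> n + \<eta>)"
definition dfun :: "nat \<Rightarrow> (nat \<Rightarrow> complex) \<Rightarrow> complex \<Rightarrow> complex" where
  "dfun N \<xi> l = (\<Prod>n\<in>{1..N}. l - \<xi> n)"

definition vac :: "cfg \<Rightarrow> complex" where
  "vac s = (if (\<forall>n. s n = 0) then 1 else 0)"

definition vand :: "nat \<Rightarrow> (nat \<Rightarrow> complex) \<Rightarrow> complex" where
  "vand M x = (\<Prod>a\<in>{1..M}. \<Prod>b\<in>{1..<a}. x a - x b)"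

definition ket_h :: "nat \<Rightarrow> complex \<Rightarrow> (nat \<Rightarrow> complex) \<Rightarrow> cfg \<Rightarrow> cfg \<Rightarrow> complex" where
  "ket_h N \<eta> \<xi> h = (\<lambda>s. mvec (cfgs N)
      (oprod (cfgs N) (\<lambda>n. if h n = 1 then (\<lambda>u v. Bop N \<eta> \<xi> (\<xi> n) u v / afun N \<eta> \<xi> (\<xi> n)) else idm) N)
      vac s / vand N \<xi>)"

definition bra_h :: "nat \<Rightarrow> complex \<Rightarrow> (nat \<Rightarrow> complex) \<Rightarrow> cfg \<Rightarrow> cfg \<Rightarrow> complex" where
  "bra_h N \<eta> \<xi> h = (\<lambda>t. vecm (cfgs N) vac
      (oprod (cfgs N) (\<lambda>n. if h n = 1 then (\<lambda>u v. Cop N \<eta> \<xi> (\<xi> n) u v / dfun N \<xi> (\<xi> n - \<eta>)) else idm) N)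
      t / vand N \<xi>)"

definition sep_bra :: "nat \<Rightarrow> complex \<Rightarrow> (nat \<Rightarrow> complex) \<Rightarrow> (complex \<Rightarrow> complex) \<Rightarrow> cfg \<Rightarrow> complex" where
  "sep_bra N \<eta> \<xi> \<alpha> = (\<lambda>t. \<Sum>h\<in>cfgs N.
      (\<Prod>a\<in>{1..N}. \<alpha> (\<xi> a - of_nat (h a) * \<eta>)) * vand N (\<lambda>a. \<xi> a - of_nat (h a) * \<eta>)
      * bra_h N \<eta> \<xi> h t)"

definition sep_ket :: "nat \<Rightarrow> complex \<Rightarrow> (nat \<Rightarrow> complex) \<Rightarrow> (complex \<Rightarrow> complex) \<Rightarrow> cfg \<Rightarrow> complex" where
  "sep_ket N \<eta> \<xi> \<beta> = (\<lambda>s. \<Sum>h\<in>cfgs N.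
      (\<Prod>a\<in>{1..N}. \<beta> (\<xi> a - of_nat (h a) * \<eta>)) * vand N (\<lambda>a. \<xi> a + of_nat (h a) * \<eta>)
      * ket_h N \<eta> \<xi> h s)"

end

theory Submission
  imports Defs
begin


lemma finite_cfgs: "finite (cfgs N)"
proof -
  have "cfgs N \<subseteq> {f. \<forall>x. (x \<in> {1..N} \<longrightarrow> f x \<in> {0,1}) \<and> (x \<notin> {1..N} \<longrightarrow> f x = 0)}"
    by (auto simp: cfgs_def le_Suc_eq)
  thus ?thesis by (rule finite_subset) (intro finite_set_of_finite_funs, auto)
qed

lemma cfgs_upd: "s \<in> cfgs N \<Longrightarrow> n \<in> {1..N} \<Longrightarrow> (v::nat) \<le> 1 \<Longrightarrow> s(n:=v) \<in> cfgs N"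
  by (auto simp: cfgs_def)

lemma cfgs_le: "s \<in> cfgs N \<Longrightarrow> s n \<le> 1"
  by (auto simp: cfgs_def)

lemma cfgs_out: "s \<in> cfgs N \<Longrightarrow> n \<notin> {1..N} \<Longrightarrow> s n = 0"
  by (auto simp: cfgs_def)

lemma sum_auxcfgs: "(\<Sum>p\<in>auxcfgs N. g p) = (\<Sum>b\<in>{0,1::nat}. \<Sum>u\<in>cfgs N. g (b,u))"
  unfolding auxcfgs_def by (simp add: sum.cartesian_product'[symmetric] sum.Sigma finite_cfgs)

lemma sum_local:
  assumes s: "s \<in> cfgs N" and n: "n \<in> {1..N}"
  shows "(\<Sum>u\<in>cfgs N. if (\<forall>m. m \<noteq> n \<longrightarrow> s m = u m) then g u else 0)
         = (\<Sum>v\<in>{0,1::nat}. g (s(n:=v)))"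
proof -
  have "(\<Sum>u\<in>cfgs N. if (\<forall>m. m \<noteq> n \<longrightarrow> s m = u m) then g u else 0)
     = (\<Sum>u\<in>{u\<in>cfgs N. \<forall>m. m \<noteq> n \<longrightarrow> s m = u m}. g u)"
    by (simp add: sum.inter_filter finite_cfgs)
  also have "{u\<in>cfgs N. \<forall>m. m \<noteq> n \<longrightarrow> s m = u m} = (\<lambda>v. s(n:=v)) ` {0,1}"
  proof (intro set_eqI iffI)
    fix u assume u: "u \<in> {u\<in>cfgs N. \<forall>m. m \<noteq> n \<longrightarrow> s m = u m}"
    hence "u = s(n := u n)" by auto
    moreover have "u n \<in> {0,1}" using u cfgs_le[of u N n] by auto
    ultimately show "u \<in> (\<lambda>v. s(n:=v)) ` {0,1}" by blast
  next
    fix u assume "u \<in> (\<lambda>v. s(n:=v)) ` {0,1::nat}"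
    thus "u \<in> {u\<in>cfgs N. \<forall>m. m \<noteq> n \<longrightarrow> s m = u m}" using s n cfgs_upd by auto
  qed
  also have "(\<Sum>u\<in>(\<lambda>v. s(n:=v)) ` {0,1}. g u) = (\<Sum>v\<in>{0,1::nat}. g (s(n:=v)))"
    by (subst sum.reindex) (auto simp: inj_on_def fun_eq_iff split: if_splits)
  finally show ?thesis .
qed

lemma mmul_assoc: "finite I \<Longrightarrow> mmul I (mmul I P Q) S = mmul I P (mmul I Q S)"
  by (auto simp: mmul_def fun_eq_iff sum_distrib_left sum_distrib_right mult.assoc intro: sum.swap)

lemma vecm_mmul: "finite I \<Longrightarrow> vecm I (vecm I v P) Q = vecm I v (mmul I P Q)"
  by (auto simp: vecm_def mmul_def fun_eq_iff sum_distrib_left sum_distrib_right mult.assoc intro: sum.swap)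

lemma mvec_mmul: "finite I \<Longrightarrow> mvec I P (mvec I Q v) = mvec I (mmul I P Q) v"
  by (auto simp: mvec_def mmul_def fun_eq_iff sum_distrib_left sum_distrib_right mult.assoc intro: sum.swap)

lemma vecm_idm: "t \<in> I \<Longrightarrow> finite I \<Longrightarrow> vecm I v idm t = v t"
  by (simp add: vecm_def idm_def mult.commute[of _ "if _ then _ else _"] if_distrib[of "\<lambda>x. x * _"] sum.delta' cong: if_cong)

lemma mvec_idm: "t \<in> I \<Longrightarrow> finite I \<Longrightarrow> mvec I idm v t = v t"
  by (simp add: mvec_def idm_def if_distrib[of "\<lambda>x. x * _"] sum.delta cong: if_cong)

definition Top :: "nat \<Rightarrow> complex \<Rightarrow> (nat \<Rightarrow> complex) \<Rightarrow> nat \<Rightarrow> nat \<Rightarrow> nat \<Rightarrow> complex \<Rightarrow> cfg op" where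
  "Top N \<eta> \<xi> k a c l = (\<lambda>s t. Tpart N \<eta> \<xi> l k (a, s) (c, t))"

lemma Tpart_Suc_local:
  assumes s: "s \<in> cfgs N" and k: "k < N"
  shows "Tpart N \<eta> \<xi> l (Suc k) (a,s) (c,t) =
    (\<Sum>b\<in>{0,1::nat}. \<Sum>v\<in>{0,1::nat}. Rmat \<eta> (l - \<xi> (Suc k)) (a, s (Suc k)) (b, v) * Tpart N \<eta> \<xi> l k (b, s(Suc k := v)) (c,t))"
proof -
  have "Tpart N \<eta> \<xi> l (Suc k) (a,s) (c,t) = (\<Sum>b\<in>{0,1::nat}. \<Sum>u\<in>cfgs N.
     R0n \<eta> (Suc k) (l - \<xi> (Suc k)) (a,s) (b,u) * Tpart N \<eta> \<xi> l k (b,u) (c,t))"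
    by (simp add: mmul_def sum_auxcfgs)
  also have "\<dots> = (\<Sum>b\<in>{0,1::nat}. \<Sum>u\<in>cfgs N. if (\<forall>m. m \<noteq> Suc k \<longrightarrow> s m = u m) then
      Rmat \<eta> (l - \<xi> (Suc k)) (a, s (Suc k)) (b, u (Suc k)) * Tpart N \<eta> \<xi> l k (b,u) (c,t) else 0)"
    by (intro sum.cong refl) (auto simp: R0n_def)
  also have "\<dots> = (\<Sum>b\<in>{0,1::nat}. \<Sum>v\<in>{0,1::nat}. Rmat \<eta> (l - \<xi> (Suc k)) (a, s (Suc k)) (b, v) * Tpart N \<eta> \<xi> l k (b, s(Suc k := v)) (c,t))"
    by (intro sum.cong refl, subst sum_local[OF s]) (use k in auto)
  finally show ?thesis .
qed

lemma Tpart_loc: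
  "Tpart N \<eta> \<xi> l k (a,s) (c,t) \<noteq> 0 \<Longrightarrow> m \<notin> {1..k} \<Longrightarrow> s m = t m"
proof (induction k arbitrary: a s)
  case 0 thus ?case by (simp add: idm_def split: if_splits)
next
  case (Suc k)
  have "(\<Sum>p\<in>auxcfgs N. R0n \<eta> (Suc k) (l - \<xi> (Suc k)) (a,s) p * Tpart N \<eta> \<xi> l k p (c,t)) \<noteq> 0"
    using Suc.prems(1) by (simp add: mmul_def)
  then obtain p where p: "R0n \<eta> (Suc k) (l - \<xi> (Suc k)) (a,s) p * Tpart N \<eta> \<xi> l k p (c,t) \<noteq> 0"
    by (meson sum.not_neutral_contains_not_neutral)
  obtain b u where pu: "p = (b,u)" by force
  have "s m = u m" using p pu Suc.prems(2) by (auto simp: R0n_def split: if_splits)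
  moreover have "u m = t m" using p pu Suc.prems(2) Suc.IH[of b u] by auto
  ultimately show ?case by simp
qed

lemma Tpart_inv:
  assumes "k < n" "n \<le> N" "s \<in> cfgs N" "t \<in> cfgs N" "s n = t n" "w \<le> 1"
  shows "Tpart N \<eta> \<xi> l k (a, s(n:=w)) (c, t(n:=w)) = Tpart N \<eta> \<xi> l k (a,s) (c,t)"
  using assms
proof (induction k arbitrary: a s)
  case 0 thus ?case by (auto simp: idm_def fun_eq_iff)
next
  case (Suc k)
  have nN: "n \<in> {1..N}" using Suc.prems by auto
  have kN: "k < N" using Suc.prems by auto
  have s': "s(n:=w) \<in> cfgs N" using cfgs_upd[OF Suc.prems(3) nN Suc.prems(6)] .
  have ne: "Suc k \<noteq> n" using Suc.prems by auto
  have "Tpart N \<eta> \<xi> l (Suc k) (a, s(n:=w)) (c, t(n:=w)) =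
    (\<Sum>b\<in>{0,1::nat}. \<Sum>v\<in>{0,1::nat}. Rmat \<eta> (l - \<xi> (Suc k)) (a, s (Suc k)) (b, v) * Tpart N \<eta> \<xi> l k (b, (s(Suc k := v))(n:=w)) (c,t(n:=w)))"
    using Tpart_Suc_local[OF s' kN] ne by (simp add: fun_upd_twist)
  also have "\<dots> = (\<Sum>b\<in>{0,1::nat}. \<Sum>v\<in>{0,1::nat}. Rmat \<eta> (l - \<xi> (Suc k)) (a, s (Suc k)) (b, v) * Tpart N \<eta> \<xi> l k (b, s(Suc k := v)) (c,t))"
  proof (intro sum.cong refl)
    fix b v assume v: "v \<in> {0,1::nat}"
    have sv: "s(Suc k := v) \<in> cfgs N" using cfgs_upd[OF Suc.prems(3), of "Suc k" v] v kN by auto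
    have eq: "Tpart N \<eta> \<xi> l k (b, (s(Suc k := v))(n:=w)) (c,t(n:=w)) = Tpart N \<eta> \<xi> l k (b, s(Suc k := v)) (c,t)"
      by (rule Suc.IH) (use Suc.prems ne sv in \<open>auto simp del: fun_upd_apply simp: fun_upd_other\<close>)
    show "Rmat \<eta> (l - \<xi> (Suc k)) (a, s (Suc k)) (b, v) * Tpart N \<eta> \<xi> l k (b, (s(Suc k := v))(n:=w)) (c,t(n:=w)) =
          Rmat \<eta> (l - \<xi> (Suc k)) (a, s (Suc k)) (b, v) * Tpart N \<eta> \<xi> l k (b, s(Suc k := v)) (c,t)"
      by (simp only: eq)
  qed
  also have "\<dots> = Tpart N \<eta> \<xi> l (Suc k) (a,s) (c,t)"
    using Tpart_Suc_local[OF Suc.prems(3) kN] by simp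
  finally show ?case .
qed

lemma sum01_single: "(\<tau>::nat) \<le> 1 \<Longrightarrow> (\<And>w. w \<noteq> \<tau> \<Longrightarrow> g w = 0) \<Longrightarrow> (\<Sum>w\<in>{0,1::nat}. g w) = g \<tau>"
  by (cases \<tau>) auto

lemma Tpart_inner:
  assumes kn: "k < n" and nN: "n \<le> N" and s: "s \<in> cfgs N" and t: "t \<in> cfgs N" and v: "v \<le> 1"
  shows "(\<Sum>u\<in>cfgs N. Tpart N \<eta> \<xi> l k (c, s(n:=v)) (e,u) * Tpart N \<eta> \<xi> m k (d, u(n:=t n)) (f,t))
       = (\<Sum>u\<in>cfgs N. Tpart N \<eta> \<xi> l k (c, s(n:=t n)) (e,u) * Tpart N \<eta> \<xi> m k (d, u) (f,t))"
proof -
  have n1: "n \<in> {1..N}" using kn nN by auto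
  have tn: "t n \<le> 1" using cfgs_le[OF t] .
  have "(\<Sum>u\<in>cfgs N. Tpart N \<eta> \<xi> l k (c, s(n:=v)) (e,u) * Tpart N \<eta> \<xi> m k (d, u(n:=t n)) (f,t))
     = (\<Sum>u\<in>{u\<in>cfgs N. u n = v}. Tpart N \<eta> \<xi> l k (c, s(n:=t n)) (e,u(n:=t n)) * Tpart N \<eta> \<xi> m k (d, u(n:=t n)) (f,t))"
  proof (rule sum.mono_neutral_cong_right)
    show "finite (cfgs N)" by (rule finite_cfgs)
    show "{u \<in> cfgs N. u n = v} \<subseteq> cfgs N" by auto
    show "\<forall>u\<in>cfgs N - {u \<in> cfgs N. u n = v}. Tpart N \<eta> \<xi> l k (c, s(n:=v)) (e,u) * Tpart N \<eta> \<xi> m k (d, u(n:=t n)) (f,t) = 0"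
    proof
      fix u assume "u \<in> cfgs N - {u \<in> cfgs N. u n = v}"
      hence "u n \<noteq> v" by auto
      hence "Tpart N \<eta> \<xi> l k (c, s(n:=v)) (e,u) = 0" using Tpart_loc[of N \<eta> \<xi> l k c "s(n:=v)" e u n] kn by auto
      thus "Tpart N \<eta> \<xi> l k (c, s(n:=v)) (e,u) * Tpart N \<eta> \<xi> m k (d, u(n:=t n)) (f,t) = 0" by simp
    qed
    fix u assume u: "u \<in> {u \<in> cfgs N. u n = v}"
    have "s(n:=v) \<in> cfgs N" using cfgs_upd[OF s n1 v] .
    hence "Tpart N \<eta> \<xi> l k (c, (s(n:=v))(n:=t n)) (e,u(n:=t n)) = Tpart N \<eta> \<xi> l k (c, s(n:=v)) (e,u)"
      using Tpart_inv[OF kn nN, of "s(n:=v)" u "t n"] u tn by auto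
    thus "Tpart N \<eta> \<xi> l k (c, s(n:=v)) (e,u) * Tpart N \<eta> \<xi> m k (d, u(n:=t n)) (f,t) =
          Tpart N \<eta> \<xi> l k (c, s(n:=t n)) (e,u(n:=t n)) * Tpart N \<eta> \<xi> m k (d, u(n:=t n)) (f,t)" by simp
  qed
  also have "\<dots> = (\<Sum>u\<in>{u\<in>cfgs N. u n = t n}. Tpart N \<eta> \<xi> l k (c, s(n:=t n)) (e,u) * Tpart N \<eta> \<xi> m k (d, u) (f,t))"
    by (rule sum.reindex_bij_witness[of _ "\<lambda>u. u(n:=v)" "\<lambda>u. u(n:=t n)"])
       (auto intro: cfgs_upd[OF _ n1 v] cfgs_upd[OF _ n1 tn])
  also have "\<dots> = (\<Sum>u\<in>cfgs N. Tpart N \<eta> \<xi> l k (c, s(n:=t n)) (e,u) * Tpart N \<eta> \<xi> m k (d, u) (f,t))"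
  proof (rule sum.mono_neutral_left)
    show "finite (cfgs N)" by (rule finite_cfgs)
    show "{u \<in> cfgs N. u n = t n} \<subseteq> cfgs N" by auto
    show "\<forall>u\<in>cfgs N - {u \<in> cfgs N. u n = t n}. Tpart N \<eta> \<xi> l k (c, s(n:=t n)) (e,u) * Tpart N \<eta> \<xi> m k (d, u) (f,t) = 0"
    proof
      fix u assume "u \<in> cfgs N - {u \<in> cfgs N. u n = t n}"
      hence "u n \<noteq> t n" by auto
      hence "Tpart N \<eta> \<xi> l k (c, s(n:=t n)) (e,u) = 0" using Tpart_loc[of N \<eta> \<xi> l k c "s(n:=t n)" e u n] kn by auto
      thus "Tpart N \<eta> \<xi> l k (c, s(n:=t n)) (e,u) * Tpart N \<eta> \<xi> m k (d, u) (f,t) = 0" by simp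
    qed
  qed
  finally show ?thesis .
qed

lemma Top_prod:
  assumes k: "k < N" and s: "s \<in> cfgs N" and t: "t \<in> cfgs N"
  shows "mmul (cfgs N) (Top N \<eta> \<xi> (Suc k) a e l) (Top N \<eta> \<xi> (Suc k) b f m) s t =
    (\<Sum>c\<in>{0,1::nat}. \<Sum>d\<in>{0,1::nat}.
      (\<Sum>v\<in>{0,1::nat}. Rmat \<eta> (l - \<xi> (Suc k)) (a, s (Suc k)) (c,v) * Rmat \<eta> (m - \<xi> (Suc k)) (b,v) (d, t (Suc k)))
      * mmul (cfgs N) (Top N \<eta> \<xi> k c e l) (Top N \<eta> \<xi> k d f m) (s(Suc k := t (Suc k))) t)"
proof -
  define n where "n = Suc k"
  define \<tau> where "\<tau> = t n"
  have n1: "n \<in> {1..N}" and kn: "k < n" and nN: "n \<le> N" using k by (auto simp: n_def)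
  have \<tau>1: "\<tau> \<le> 1" using cfgs_le[OF t] by (simp add: \<tau>_def)
  define Rl where "Rl = Rmat \<eta> (l - \<xi> n)"
  define Rm where "Rm = Rmat \<eta> (m - \<xi> n)"
  define Tl where "Tl = Tpart N \<eta> \<xi> l k"
  define Tm where "Tm = Tpart N \<eta> \<xi> m k"
  have step1: "Tpart N \<eta> \<xi> m (Suc k) (b,u) (f,t) = (\<Sum>d\<in>{0,1::nat}. Rm (b, u n) (d,\<tau>) * Tm (d, u(n:=\<tau>)) (f,t))"
    if u: "u \<in> cfgs N" for u
  proof -
    have "Tpart N \<eta> \<xi> m (Suc k) (b,u) (f,t) = (\<Sum>d\<in>{0,1::nat}. \<Sum>w\<in>{0,1::nat}. Rm (b, u n) (d,w) * Tm (d, u(n:=w)) (f,t))"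
      using Tpart_Suc_local[OF u k] by (simp add: n_def Rm_def Tm_def)
    also have "\<dots> = (\<Sum>d\<in>{0,1::nat}. Rm (b, u n) (d,\<tau>) * Tm (d, u(n:=\<tau>)) (f,t))"
    proof (intro sum.cong refl sum01_single[OF \<tau>1])
      fix d w assume "w \<noteq> \<tau>"
      hence "Tm (d, u(n:=w)) (f,t) = 0" using Tpart_loc[of N \<eta> \<xi> m k d "u(n:=w)" f t n] kn
        by (auto simp: Tm_def \<tau>_def)
      thus "Rm (b, u n) (d,w) * Tm (d, u(n:=w)) (f,t) = 0" by simp
    qed
    finally show ?thesis .
  qed
  have step2: "Top N \<eta> \<xi> (Suc k) a e l s u * Top N \<eta> \<xi> (Suc k) b f m u t =
     (\<Sum>c\<in>{0,1::nat}. \<Sum>d\<in>{0,1::nat}. \<Sum>v\<in>{0,1::nat}. (Rl (a, s n) (c,v) * Rm (b,v) (d,\<tau>)) *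
         (Tl (c, s(n:=v)) (e,u) * Tm (d, u(n:=\<tau>)) (f,t)))"
    if u: "u \<in> cfgs N" for u
  proof -
    have "Top N \<eta> \<xi> (Suc k) a e l s u * Top N \<eta> \<xi> (Suc k) b f m u t =
       (\<Sum>c\<in>{0,1::nat}. \<Sum>v\<in>{0,1::nat}. Rl (a, s n) (c,v) * Tl (c, s(n:=v)) (e,u)) *
       (\<Sum>d\<in>{0,1::nat}. Rm (b, u n) (d,\<tau>) * Tm (d, u(n:=\<tau>)) (f,t))"
      using Tpart_Suc_local[OF s k] step1[OF u] by (simp add: Top_def n_def Rl_def Tl_def)
    also have "\<dots> = (\<Sum>c\<in>{0,1::nat}. \<Sum>v\<in>{0,1::nat}. Rl (a, s n) (c,v) * Tl (c, s(n:=v)) (e,u) *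
       (\<Sum>d\<in>{0,1::nat}. Rm (b, v) (d,\<tau>) * Tm (d, u(n:=\<tau>)) (f,t)))"
      unfolding sum_distrib_right
    proof (intro sum.cong refl)
      fix c v
      show "Rl (a, s n) (c,v) * Tl (c, s(n:=v)) (e,u) * (\<Sum>d\<in>{0,1::nat}. Rm (b, u n) (d,\<tau>) * Tm (d, u(n:=\<tau>)) (f,t)) =
            Rl (a, s n) (c,v) * Tl (c, s(n:=v)) (e,u) * (\<Sum>d\<in>{0,1::nat}. Rm (b, v) (d,\<tau>) * Tm (d, u(n:=\<tau>)) (f,t))"
      proof (cases "Tl (c, s(n:=v)) (e,u) = 0")
        case False
        hence "u n = v" using Tpart_loc[of N \<eta> \<xi> l k c "s(n:=v)" e u n] kn by (auto simp: Tl_def)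
        thus ?thesis by simp
      qed simp
    qed
    also have "\<dots> = (\<Sum>c\<in>{0,1::nat}. \<Sum>v\<in>{0,1::nat}. \<Sum>d\<in>{0,1::nat}. (Rl (a, s n) (c,v) * Rm (b,v) (d,\<tau>)) *
         (Tl (c, s(n:=v)) (e,u) * Tm (d, u(n:=\<tau>)) (f,t)))"
      unfolding sum_distrib_left by (intro sum.cong refl) (simp only: mult_ac)
    also have "\<dots> = (\<Sum>c\<in>{0,1::nat}. \<Sum>d\<in>{0,1::nat}. \<Sum>v\<in>{0,1::nat}. (Rl (a, s n) (c,v) * Rm (b,v) (d,\<tau>)) *
         (Tl (c, s(n:=v)) (e,u) * Tm (d, u(n:=\<tau>)) (f,t)))"
      by (intro sum.cong refl sum.swap)
    finally show ?thesis .
  qed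
  have "mmul (cfgs N) (Top N \<eta> \<xi> (Suc k) a e l) (Top N \<eta> \<xi> (Suc k) b f m) s t =
     (\<Sum>u\<in>cfgs N. \<Sum>c\<in>{0,1::nat}. \<Sum>d\<in>{0,1::nat}. \<Sum>v\<in>{0,1::nat}. (Rl (a, s n) (c,v) * Rm (b,v) (d,\<tau>)) *
         (Tl (c, s(n:=v)) (e,u) * Tm (d, u(n:=\<tau>)) (f,t)))"
    unfolding mmul_def by (intro sum.cong refl step2)
  also have "\<dots> = (\<Sum>c\<in>{0,1::nat}. \<Sum>d\<in>{0,1::nat}. \<Sum>v\<in>{0,1::nat}. (Rl (a, s n) (c,v) * Rm (b,v) (d,\<tau>)) *
         (\<Sum>u\<in>cfgs N. Tl (c, s(n:=v)) (e,u) * Tm (d, u(n:=\<tau>)) (f,t)))"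
    unfolding sum_distrib_left
    by (subst sum.swap, rule sum.cong[OF refl], subst sum.swap, rule sum.cong[OF refl], subst sum.swap, rule refl)
  also have "\<dots> = (\<Sum>c\<in>{0,1::nat}. \<Sum>d\<in>{0,1::nat}. \<Sum>v\<in>{0,1::nat}. (Rl (a, s n) (c,v) * Rm (b,v) (d,\<tau>)) *
         mmul (cfgs N) (Top N \<eta> \<xi> k c e l) (Top N \<eta> \<xi> k d f m) (s(Suc k := t (Suc k))) t)"
  proof (intro sum.cong refl)
    fix c d v assume "v \<in> {0,1::nat}"
    hence v1: "v \<le> 1" by auto
    show "(Rl (a, s n) (c,v) * Rm (b,v) (d,\<tau>)) * (\<Sum>u\<in>cfgs N. Tl (c, s(n:=v)) (e,u) * Tm (d, u(n:=\<tau>)) (f,t)) =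
      (Rl (a, s n) (c,v) * Rm (b,v) (d,\<tau>)) * mmul (cfgs N) (Top N \<eta> \<xi> k c e l) (Top N \<eta> \<xi> k d f m) (s(Suc k := t (Suc k))) t"
      using Tpart_inner[OF kn nN s t v1, of \<eta> \<xi> l c e m d f]
      by (simp add: mmul_def Top_def Tl_def Tm_def \<tau>_def n_def)
  qed
  finally show ?thesis by (simp only: sum_distrib_right n_def \<tau>_def Rl_def Rm_def)
qed



definition JJ :: "(nat \<times> nat) set" where "JJ = {0,1} \<times> {0,1}"

lemma finite_JJ: "finite JJ" by (simp add: JJ_def)

definition Rq :: "complex \<Rightarrow> complex \<Rightarrow> (nat \<times> nat) op" where
  "Rq \<eta> x = (\<lambda>(a,b) (c,d). x * (if a = c \<and> b = d then 1 else 0) + \<eta> * (if a = d \<and> b = c then 1 else 0))"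

lemma Rmat_eq: "a \<le> 1 \<Longrightarrow> b \<le> 1 \<Longrightarrow> c \<le> 1 \<Longrightarrow> d \<le> 1 \<Longrightarrow>
   Rmat \<eta> l (a,b) (c,d) = Rq \<eta> l (a,b) (c,d)"
  by (cases a; cases b; cases c; cases d) (auto simp: Rmat_def Rrows_def Rq_def)

definition M1 where "M1 \<eta> l m \<sigma> \<tau> = (\<lambda>(a,b) (c,d). \<Sum>v\<in>{0,1::nat}. Rmat \<eta> l (a,\<sigma>) (c,v) * Rmat \<eta> m (b,v) (d,\<tau>))"
definition M2 where "M2 \<eta> l m \<sigma> \<tau> = (\<lambda>(a,b) (c,d). \<Sum>v\<in>{0,1::nat}. Rmat \<eta> m (b,\<sigma>) (d,v) * Rmat \<eta> l (a,v) (c,\<tau>))"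

lemma JJ_sum: "(\<Sum>p\<in>JJ. g p) = g (0,0) + g (0,1) + g (1,0) + g (1,1)"
  by (simp add: JJ_def add.assoc)

lemma RLL:
  assumes "\<sigma> \<le> 1" "\<tau> \<le> 1" "i \<in> JJ" "j \<in> JJ"
  shows "mmul JJ (Rq \<eta> (l - m)) (M1 \<eta> l m \<sigma> \<tau>) i j = mmul JJ (M2 \<eta> l m \<sigma> \<tau>) (Rq \<eta> (l - m)) i j"
proof -
  obtain a b c d where ij: "i = (a,b)" "j = (c,d)" "a \<le> 1" "b \<le> 1" "c \<le> 1" "d \<le> 1"
    using assms by (cases i; cases j) (auto simp: JJ_def)
  show ?thesis using assms ij
    apply (simp add: mmul_def JJ_sum M1_def M2_def Rmat_eq)
    apply (cases a; cases b; cases c; cases d; cases \<sigma>; cases \<tau>)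
    apply (simp_all add: Rq_def algebra_simps)
    done
qed

definition P1 where "P1 N \<eta> \<xi> k l m s t = (\<lambda>(c,d) (e,f). mmul (cfgs N) (Top N \<eta> \<xi> k c e l) (Top N \<eta> \<xi> k d f m) s t)"
definition P2 where "P2 N \<eta> \<xi> k l m s t = (\<lambda>(a,b) (c,d). mmul (cfgs N) (Top N \<eta> \<xi> k b d m) (Top N \<eta> \<xi> k a c l) s t)"

lemma abstract_step:
  assumes "finite I"
    and RM: "\<And>i j. i \<in> I \<Longrightarrow> j \<in> I \<Longrightarrow> mmul I R A1 i j = mmul I A2 R i j"
    and RP: "\<And>i j. i \<in> I \<Longrightarrow> j \<in> I \<Longrightarrow> mmul I R B1 i j = mmul I B2 R i j"
    and ij: "i \<in> I" "j \<in> I"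
  shows "mmul I R (mmul I A1 B1) i j = mmul I (mmul I A2 B2) R i j"
proof -
  have "mmul I R (mmul I A1 B1) i j = mmul I (mmul I R A1) B1 i j" by (simp add: mmul_assoc assms)
  also have "\<dots> = mmul I (mmul I A2 R) B1 i j" by (simp only: mmul_def[of I _ B1]) (rule sum.cong[OF refl], simp add: RM ij)
  also have "\<dots> = mmul I A2 (mmul I R B1) i j" by (simp add: mmul_assoc assms)
  also have "\<dots> = mmul I A2 (mmul I B2 R) i j" by (simp only: mmul_def[of I A2]) (rule sum.cong[OF refl], simp add: RP ij)
  also have "\<dots> = mmul I (mmul I A2 B2) R i j" by (simp add: mmul_assoc assms)
  finally show ?thesis .
qed

lemma P1_Suc:
  assumes k: "k < N" and s: "s \<in> cfgs N" and t: "t \<in> cfgs N"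
  shows "P1 N \<eta> \<xi> (Suc k) l m s t i j =
    mmul JJ (M1 \<eta> (l - \<xi> (Suc k)) (m - \<xi> (Suc k)) (s (Suc k)) (t (Suc k))) (P1 N \<eta> \<xi> k l m (s(Suc k := t (Suc k))) t) i j"
proof -
  obtain a b e f where ij: "i = (a,b)" "j = (e,f)" by (cases i; cases j) auto
  show ?thesis
    unfolding ij P1_def M1_def
    apply (simp only: prod.case Top_prod[OF k s t])
    apply (simp add: mmul_def[of JJ] JJ_sum)
    done
qed

lemma P2_Suc:
  assumes k: "k < N" and s: "s \<in> cfgs N" and t: "t \<in> cfgs N"
  shows "P2 N \<eta> \<xi> (Suc k) l m s t i j =
    mmul JJ (M2 \<eta> (l - \<xi> (Suc k)) (m - \<xi> (Suc k)) (s (Suc k)) (t (Suc k))) (P2 N \<eta> \<xi> k l m (s(Suc k := t (Suc k))) t) i j"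
proof -
  obtain a b e f where ij: "i = (a,b)" "j = (e,f)" by (cases i; cases j) auto
  show ?thesis
    unfolding ij P2_def M2_def
    apply (simp only: prod.case Top_prod[OF k s t])
    apply (simp add: mmul_def[of JJ] JJ_sum)
    done
qed

lemma Top0: "Top N \<eta> \<xi> 0 a e l = (\<lambda>u v. if a = e \<and> u = v then 1 else 0)"
  by (simp add: Top_def idm_def fun_eq_iff)

lemma idm_prod_sum: "s \<in> cfgs N \<Longrightarrow>
  (\<Sum>j\<in>cfgs N. (if P \<and> s = j then 1 else 0) * (if Q \<and> j = t then 1 else 0) :: complex) = (if P \<and> Q \<and> s = t then 1 else 0)"
proof -
  assume s: "s \<in> cfgs N"
  have "(\<Sum>j\<in>cfgs N. (if P \<and> s = j then 1 else 0) * (if Q \<and> j = t then 1 else 0) :: complex)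
      = (\<Sum>j\<in>cfgs N. if s = j then (if P \<and> Q \<and> s = t then 1 else 0) else 0)"
    by (intro sum.cong refl) auto
  also have "\<dots> = (if P \<and> Q \<and> s = t then 1 else 0)" using s by (simp add: sum.delta finite_cfgs)
  finally show ?thesis .
qed

lemma RTT:
  assumes "k \<le> N" "s \<in> cfgs N" "t \<in> cfgs N" "i \<in> JJ" "j \<in> JJ"
  shows "mmul JJ (Rq \<eta> (l - m)) (P1 N \<eta> \<xi> k l m s t) i j = mmul JJ (P2 N \<eta> \<xi> k l m s t) (Rq \<eta> (l - m)) i j"
  using assms
proof (induction k arbitrary: s i j)
  case 0
  obtain a b e f where ij: "i = (a,b)" "j = (e,f)" by (cases i; cases j) auto
  have e1: "P1 N \<eta> \<xi> 0 l m s t = (\<lambda>(c,d) (e,f). if c = e \<and> d = f \<and> s = t then 1 else 0)"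
    using 0 by (intro ext) (auto simp: P1_def Top0 mmul_def idm_prod_sum)
  have e2: "P2 N \<eta> \<xi> 0 l m s t = (\<lambda>(a,b) (c,d). if a = c \<and> b = d \<and> s = t then 1 else 0)"
    using 0 by (intro ext) (auto simp: P2_def Top0 mmul_def idm_prod_sum)
  show ?case using 0 unfolding e1 e2 ij
    by (auto simp: mmul_def JJ_sum Rq_def JJ_def)
next
  case (Suc k)
  have k: "k < N" using Suc.prems by simp
  let ?n = "Suc k"
  have s': "s(?n := t ?n) \<in> cfgs N" using cfgs_upd[OF Suc.prems(2), of ?n "t ?n"] cfgs_le[OF Suc.prems(3)] k by auto
  have x: "l - m = (l - \<xi> ?n) - (m - \<xi> ?n)" by simp
  have "mmul JJ (Rq \<eta> (l - m)) (P1 N \<eta> \<xi> (Suc k) l m s t) i j =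
        mmul JJ (Rq \<eta> (l - m)) (mmul JJ (M1 \<eta> (l - \<xi> ?n) (m - \<xi> ?n) (s ?n) (t ?n)) (P1 N \<eta> \<xi> k l m (s(?n := t ?n)) t)) i j"
    unfolding mmul_def by (simp add: P1_Suc[OF k Suc.prems(2,3)] mmul_def)
  also have "\<dots> = mmul JJ (mmul JJ (M2 \<eta> (l - \<xi> ?n) (m - \<xi> ?n) (s ?n) (t ?n)) (P2 N \<eta> \<xi> k l m (s(?n := t ?n)) t)) (Rq \<eta> (l - m)) i j"
  proof (rule abstract_step[OF finite_JJ _ _ Suc.prems(4,5)])
    fix i j assume "i \<in> JJ" "j \<in> JJ"
    thus "mmul JJ (Rq \<eta> (l - m)) (M1 \<eta> (l - \<xi> ?n) (m - \<xi> ?n) (s ?n) (t ?n)) i j =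
          mmul JJ (M2 \<eta> (l - \<xi> ?n) (m - \<xi> ?n) (s ?n) (t ?n)) (Rq \<eta> (l - m)) i j"
      using RLL[of "s ?n" "t ?n" i j \<eta> "l - \<xi> ?n" "m - \<xi> ?n"] cfgs_le[OF Suc.prems(2)] cfgs_le[OF Suc.prems(3)]
      by (simp only: x)
  next
    fix i j assume "i \<in> JJ" "j \<in> JJ"
    thus "mmul JJ (Rq \<eta> (l - m)) (P1 N \<eta> \<xi> k l m (s(?n := t ?n)) t) i j =
          mmul JJ (P2 N \<eta> \<xi> k l m (s(?n := t ?n)) t) (Rq \<eta> (l - m)) i j"
      using Suc.IH[OF _ s' Suc.prems(3)] Suc.prems(1) by (simp del: fun_upd_apply)
  qed
  also have "\<dots> = mmul JJ (P2 N \<eta> \<xi> (Suc k) l m s t) (Rq \<eta> (l - m)) i j"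
    unfolding mmul_def by (simp add: P2_Suc[OF k Suc.prems(2,3)] mmul_def)
  finally show ?case .
qed



lemma Dop_Top: "Dop N \<eta> \<xi> l = Top N \<eta> \<xi> N 1 1 l" by (simp add: Dop_def Top_def Tmon_def fun_eq_iff)
lemma Cop_Top: "Cop N \<eta> \<xi> l = Top N \<eta> \<xi> N 1 0 l" by (simp add: Cop_def Top_def Tmon_def fun_eq_iff)
lemma Bop_Top: "Bop N \<eta> \<xi> l = Top N \<eta> \<xi> N 0 1 l" by (simp add: Bop_def Top_def Tmon_def fun_eq_iff)

lemma JJ_mem: "(0,0) \<in> JJ" "(0,1) \<in> JJ" "(1,0) \<in> JJ" "(1,1) \<in> JJ" by (auto simp: JJ_def)

lemma rel_DC:
  assumes "s \<in> cfgs N" "t \<in> cfgs N"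
  shows "(l - m) * mmul (cfgs N) (Cop N \<eta> \<xi> m) (Dop N \<eta> \<xi> l) s t =
    (l - m + \<eta>) * mmul (cfgs N) (Dop N \<eta> \<xi> l) (Cop N \<eta> \<xi> m) s t - \<eta> * mmul (cfgs N) (Dop N \<eta> \<xi> m) (Cop N \<eta> \<xi> l) s t"
  using RTT[of N N s t "(1,1)" "(1,0)" \<eta> l m \<xi>] assms JJ_mem
  by (simp add: mmul_def[of JJ] JJ_sum P1_def P2_def Rq_def Dop_Top Cop_Top algebra_simps)

lemma rel_DB:
  assumes "s \<in> cfgs N" "t \<in> cfgs N"
  shows "(l - m) * mmul (cfgs N) (Dop N \<eta> \<xi> l) (Bop N \<eta> \<xi> m) s t =
    (l - m + \<eta>) * mmul (cfgs N) (Bop N \<eta> \<xi> m) (Dop N \<eta> \<xi> l) s t - \<eta> * mmul (cfgs N) (Bop N \<eta> \<xi> l) (Dop N \<eta> \<xi> m) s t"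
  using RTT[of N N s t "(1,0)" "(1,1)" \<eta> l m \<xi>] assms JJ_mem
  by (simp add: mmul_def[of JJ] JJ_sum P1_def P2_def Rq_def Dop_Top Bop_Top algebra_simps)

lemma vac_bra_Tpart:
  "k \<le> N \<Longrightarrow> s \<in> cfgs N \<Longrightarrow> (\<forall>n\<in>{1..k}. s n = 0) \<Longrightarrow>
    Tpart N \<eta> \<xi> l k (1,s) (1,t) = (if s = t then (\<Prod>n\<in>{1..k}. l - \<xi> n) else 0) \<and>
    Tpart N \<eta> \<xi> l k (0,s) (1,t) = 0"
proof (induction k arbitrary: s)
  case 0 thus ?case by (simp add: idm_def)
next
  case (Suc k)
  have k: "k < N" using Suc.prems by simp
  have sn: "s (Suc k) = 0" using Suc.prems by auto
  have s0: "s(Suc k := 0) = s" using sn by auto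
  have s1: "s(Suc k := 1) \<in> cfgs N" using cfgs_upd[OF Suc.prems(2), of "Suc k" 1] k by auto
  have z1: "\<forall>n\<in>{1..k}. (s(Suc k := 1)) n = 0" using Suc.prems by auto
  have IH0: "Tpart N \<eta> \<xi> l k (0, s(Suc k := 1)) (1,t) = 0" using Suc.IH[OF _ s1 z1] k by (simp del: fun_upd_apply)
  have IH1: "Tpart N \<eta> \<xi> l k (1,s) (1,t) = (if s = t then (\<Prod>n\<in>{1..k}. l - \<xi> n) else 0)"
     "Tpart N \<eta> \<xi> l k (0,s) (1,t) = 0" using Suc.IH[OF _ Suc.prems(2)] Suc.prems k by auto
  show ?case
    unfolding Tpart_Suc_local[OF Suc.prems(2) k]
    using IH0 IH1 s0 sn
    by (simp add: Rmat_eq Rq_def)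
qed

lemma vac_ket_Tpart:
  "k \<le> N \<Longrightarrow> t \<in> cfgs N \<Longrightarrow> s \<in> cfgs N \<Longrightarrow> (\<forall>n\<in>{1..k}. t n = 0) \<Longrightarrow>
    Tpart N \<eta> \<xi> l k (1,s) (1,t) = (if s = t then (\<Prod>n\<in>{1..k}. l - \<xi> n) else 0) \<and>
    Tpart N \<eta> \<xi> l k (1,s) (0,t) = 0"
proof (induction k arbitrary: s)
  case 0 thus ?case by (simp add: idm_def)
next
  case (Suc k)
  have k: "k < N" using Suc.prems by simp
  have tn: "t (Suc k) = 0" using Suc.prems by auto
  have red: "Tpart N \<eta> \<xi> l (Suc k) (1,s) (c,t) =
     (\<Sum>b\<in>{0,1::nat}. Rmat \<eta> (l - \<xi> (Suc k)) (1, s (Suc k)) (b, 0) * Tpart N \<eta> \<xi> l k (b, s(Suc k := 0)) (c,t))" for c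
  proof -
    have "Tpart N \<eta> \<xi> l (Suc k) (1,s) (c,t) = (\<Sum>b\<in>{0,1::nat}. \<Sum>v\<in>{0,1::nat}. Rmat \<eta> (l - \<xi> (Suc k)) (1, s (Suc k)) (b, v) * Tpart N \<eta> \<xi> l k (b, s(Suc k := v)) (c,t))"
      by (rule Tpart_Suc_local[OF Suc.prems(3) k])
    also have "\<dots> = (\<Sum>b\<in>{0,1::nat}. Rmat \<eta> (l - \<xi> (Suc k)) (1, s (Suc k)) (b, 0) * Tpart N \<eta> \<xi> l k (b, s(Suc k := 0)) (c,t))"
    proof (intro sum.cong refl sum01_single)
      fix b w assume "(w::nat) \<noteq> 0"
      hence "Tpart N \<eta> \<xi> l k (b, s(Suc k := w)) (c,t) = 0"
        using Tpart_loc[of N \<eta> \<xi> l k b "s(Suc k := w)" c t "Suc k"] tn by auto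
      thus "Rmat \<eta> (l - \<xi> (Suc k)) (1, s (Suc k)) (b, w) * Tpart N \<eta> \<xi> l k (b, s(Suc k := w)) (c,t) = 0" by simp
    qed simp
    finally show ?thesis .
  qed
  have sn: "s (Suc k) \<le> 1" using cfgs_le[OF Suc.prems(3)] .
  show ?case
  proof (cases "s (Suc k) = 0")
    case True
    hence s0: "s(Suc k := 0) = s" by auto
    have IH1: "Tpart N \<eta> \<xi> l k (1,s) (1,t) = (if s = t then (\<Prod>n\<in>{1..k}. l - \<xi> n) else 0)"
     "Tpart N \<eta> \<xi> l k (1,s) (0,t) = 0" using Suc.IH[OF _ Suc.prems(2,3)] Suc.prems k by auto
    show ?thesis unfolding red using True s0 IH1 by (simp add: Rmat_eq Rq_def)
  next
    case False
    hence s1: "s (Suc k) = 1" using sn by auto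
    hence "s \<noteq> t" using tn by auto
    thus ?thesis unfolding red using s1 by (simp add: Rmat_eq Rq_def)
  qed
qed

lemma vac_eq: "vac = (\<lambda>s. if s = (\<lambda>_. 0) then 1 else 0)"
  by (auto simp: vac_def fun_eq_iff)

lemma zero_cfgs: "(\<lambda>_. 0) \<in> cfgs N" by (simp add: cfgs_def)

lemma vac_bra_eig: "t \<in> cfgs N \<Longrightarrow> vecm (cfgs N) vac (Dop N \<eta> \<xi> l) t = dfun N \<xi> l * vac t"
proof -
  assume t: "t \<in> cfgs N"
  have "vecm (cfgs N) vac (Dop N \<eta> \<xi> l) t = Dop N \<eta> \<xi> l (\<lambda>_. 0) t"
    by (simp add: vecm_def vac_eq if_distrib[of "\<lambda>x. x * _"] sum.delta finite_cfgs zero_cfgs cong: if_cong)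
  also have "\<dots> = dfun N \<xi> l * vac t"
    using vac_bra_Tpart[of N N "\<lambda>_. 0" \<eta> \<xi> l t] zero_cfgs
    by (auto simp: Dop_def Tmon_def dfun_def vac_eq)
  finally show ?thesis .
qed

lemma vac_ket_eig: "s \<in> cfgs N \<Longrightarrow> mvec (cfgs N) (Dop N \<eta> \<xi> l) vac s = dfun N \<xi> l * vac s"
proof -
  assume s: "s \<in> cfgs N"
  have "mvec (cfgs N) (Dop N \<eta> \<xi> l) vac s = Dop N \<eta> \<xi> l s (\<lambda>_. 0)"
    by (simp add: mvec_def vac_eq mult.commute[of _ "if _ then _ else _"] if_distrib[of "\<lambda>x. x * _"] sum.delta' finite_cfgs zero_cfgs cong: if_cong)
  also have "\<dots> = dfun N \<xi> l * vac s"
    using vac_ket_Tpart[of N N "\<lambda>_. 0" s \<eta> \<xi> l] zero_cfgs s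
    by (auto simp: Dop_def Tmon_def dfun_def vac_eq)
  finally show ?thesis .
qed

lemma Rrows_affine: "Rrows \<eta> \<mu> ! i ! j = \<mu> * (Rrows \<eta> 1 ! i ! j - Rrows \<eta> 0 ! i ! j) + Rrows \<eta> 0 ! i ! j"
proof -
  have i: "i = 0 \<or> i = 1 \<or> i = 2 \<or> i = 3 \<or> (\<exists>i'. i = Suc (Suc (Suc (Suc i'))))" by presburger
  have j: "j = 0 \<or> j = 1 \<or> j = 2 \<or> j = 3 \<or> (\<exists>j'. j = Suc (Suc (Suc (Suc j'))))" by presburger
  from i j show ?thesis by (elim disjE exE) (simp_all add: Rrows_def numeral_eq_Suc algebra_simps)
qed

lemma R0n_cont: "isCont (\<lambda>l. R0n \<eta> n (l - c) p q) l0"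
proof -
  obtain a s b t where pq: "p = (a,s)" "q = (b,t)" by (cases p; cases q) auto
  show ?thesis
  proof (cases "\<forall>m. m \<noteq> n \<longrightarrow> s m = t m")
    case True
    show ?thesis unfolding pq R0n_def using True
      by (simp add: Rmat_def Rrows_affine[of \<eta> "_ - c"] del: Rrows_def)
  next
    case False
    thus ?thesis unfolding pq R0n_def by (simp del: not_all)
  qed
qed

lemma Tpart_cont: "isCont (\<lambda>l. Tpart N \<eta> \<xi> l k p q) l0"
proof (induction k arbitrary: p)
  case 0 thus ?case by simp
next
  case (Suc k)
  show ?case by (simp add: mmul_def) (intro continuous_intros R0n_cont Suc.IH)
qed

lemma Dop_cont: "isCont (\<lambda>l. Dop N \<eta> \<xi> l u t) l0"
  unfolding Dop_def Tmon_def by (rule Tpart_cont)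



definition beig where "beig N \<eta> \<xi> w E \<longleftrightarrow> (\<forall>l. \<forall>t\<in>cfgs N. vecm (cfgs N) w (Dop N \<eta> \<xi> l) t = E l * w t)"
definition keig where "keig N \<eta> \<xi> v E \<longleftrightarrow> (\<forall>l. \<forall>s\<in>cfgs N. mvec (cfgs N) (Dop N \<eta> \<xi> l) v s = E l * v s)"

lemma cont_eq_point:
  fixes f g :: "complex \<Rightarrow> complex"
  assumes "isCont f x" "isCont g x" "\<And>y. y \<noteq> x \<Longrightarrow> f y = g y"
  shows "f x = g x"
proof -
  have "(f \<longlongrightarrow> f x) (at x)" using assms(1) by (simp add: isCont_def)
  moreover have "(f \<longlongrightarrow> g x) (at x)"
  proof -
    have "(g \<longlongrightarrow> g x) (at x)" using assms(2) by (simp add: isCont_def)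
    moreover have "eventually (\<lambda>y. g y = f y) (at x)" using assms(3) by (auto simp: eventually_at_filter)
    ultimately show ?thesis by (rule Lim_transform_eventually)
  qed
  ultimately show ?thesis by (rule tendsto_unique[rotated]) simp
qed

lemma vecm_const: "(\<And>u. u \<in> I \<Longrightarrow> w u = c * w' u) \<Longrightarrow> vecm I w X t = c * vecm I w' X t"
  by (simp add: vecm_def sum_distrib_left mult.assoc)

lemma mvec_const: "(\<And>u. u \<in> I \<Longrightarrow> w u = c * w' u) \<Longrightarrow> mvec I X w t = c * mvec I X w' t"
  by (simp add: mvec_def sum_distrib_left mult_ac)

lemma beig_apply: "beig N \<eta> \<xi> w E \<Longrightarrow> vecm (cfgs N) (vecm (cfgs N) w (Dop N \<eta> \<xi> l)) X t = E l * vecm (cfgs N) w X t"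
  by (rule vecm_const) (simp add: beig_def)

lemma keig_apply: "keig N \<eta> \<xi> v E \<Longrightarrow> mvec (cfgs N) X (mvec (cfgs N) (Dop N \<eta> \<xi> l) v) s = E l * mvec (cfgs N) X v s"
  by (rule mvec_const) (simp add: keig_def)

lemma bra_step:
  assumes eig: "beig N \<eta> \<xi> w E" and E0: "E \<mu> = 0"
    and E': "\<And>l. E' l * (l - \<mu>) = E l * (l - \<mu> + \<eta>)" and cE': "isCont E' \<mu>"
  shows "beig N \<eta> \<xi> (vecm (cfgs N) w (Cop N \<eta> \<xi> \<mu>)) E'"
  unfolding beig_def
proof (intro allI ballI)
  fix l t assume t: "t \<in> cfgs N"
  let ?C = "cfgs N"
  let ?w' = "vecm ?C w (Cop N \<eta> \<xi> \<mu>)"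
  have main: "vecm ?C ?w' (Dop N \<eta> \<xi> l) t = E' l * ?w' t" if l: "l \<noteq> \<mu>" for l
  proof -
    have "(l - \<mu>) * vecm ?C ?w' (Dop N \<eta> \<xi> l) t = (l - \<mu>) * vecm ?C w (mmul ?C (Cop N \<eta> \<xi> \<mu>) (Dop N \<eta> \<xi> l)) t"
      by (simp add: vecm_mmul finite_cfgs)
    also have "\<dots> = (\<Sum>u\<in>?C. w u * ((l - \<mu>) * mmul ?C (Cop N \<eta> \<xi> \<mu>) (Dop N \<eta> \<xi> l) u t))"
      by (simp add: vecm_def sum_distrib_left mult_ac)
    also have "\<dots> = (\<Sum>u\<in>?C. w u * ((l - \<mu> + \<eta>) * mmul ?C (Dop N \<eta> \<xi> l) (Cop N \<eta> \<xi> \<mu>) u t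
          - \<eta> * mmul ?C (Dop N \<eta> \<xi> \<mu>) (Cop N \<eta> \<xi> l) u t))"
      by (intro sum.cong refl) (simp add: rel_DC t)
    also have "\<dots> = (l - \<mu> + \<eta>) * vecm ?C w (mmul ?C (Dop N \<eta> \<xi> l) (Cop N \<eta> \<xi> \<mu>)) t
          - \<eta> * vecm ?C w (mmul ?C (Dop N \<eta> \<xi> \<mu>) (Cop N \<eta> \<xi> l)) t"
      by (simp add: vecm_def sum_distrib_left sum_subtractf right_diff_distrib mult_ac)
    also have "\<dots> = (l - \<mu> + \<eta>) * vecm ?C (vecm ?C w (Dop N \<eta> \<xi> l)) (Cop N \<eta> \<xi> \<mu>) t
          - \<eta> * vecm ?C (vecm ?C w (Dop N \<eta> \<xi> \<mu>)) (Cop N \<eta> \<xi> l) t"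
      by (simp add: vecm_mmul finite_cfgs)
    also have "\<dots> = (l - \<mu> + \<eta>) * (E l * ?w' t) - \<eta> * (E \<mu> * vecm ?C w (Cop N \<eta> \<xi> l) t)"
      by (simp add: beig_apply[OF eig])
    also have "\<dots> = (l - \<mu>) * (E' l * ?w' t)"
    proof -
      have e: "(l - \<mu> + \<eta>) * E l = (l - \<mu>) * E' l" using E'[of l] by (simp add: mult.commute)
      show ?thesis using e E0 by (simp add: mult.assoc[symmetric])
    qed
    finally show ?thesis using l by simp
  qed
  show "vecm ?C ?w' (Dop N \<eta> \<xi> l) t = E' l * ?w' t"
  proof (cases "l = \<mu>")
    case False thus ?thesis by (rule main)
  next
    case True
    have "(\<lambda>l. vecm ?C ?w' (Dop N \<eta> \<xi> l) t) \<mu> = (\<lambda>l. E' l * ?w' t) \<mu>"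
    proof (rule cont_eq_point[where f = "\<lambda>l. vecm ?C ?w' (Dop N \<eta> \<xi> l) t" and g = "\<lambda>l. E' l * ?w' t"])
      show "isCont (\<lambda>l. vecm ?C ?w' (Dop N \<eta> \<xi> l) t) \<mu>"
        unfolding vecm_def[of ?C ?w'] by (intro continuous_intros Dop_cont)
      show "isCont (\<lambda>l. E' l * ?w' t) \<mu>" by (intro continuous_intros cE')
    qed (rule main)
    thus ?thesis using True by simp
  qed
qed

lemma ket_step:
  assumes eig: "keig N \<eta> \<xi> v E" and E0: "E \<mu> = 0"
    and E': "\<And>l. E' l * (l - \<mu>) = E l * (l - \<mu> + \<eta>)" and cE': "isCont E' \<mu>"
  shows "keig N \<eta> \<xi> (mvec (cfgs N) (Bop N \<eta> \<xi> \<mu>) v) E'"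
  unfolding keig_def
proof (intro allI ballI)
  fix l s assume s: "s \<in> cfgs N"
  let ?C = "cfgs N"
  let ?v' = "mvec ?C (Bop N \<eta> \<xi> \<mu>) v"
  have main: "mvec ?C (Dop N \<eta> \<xi> l) ?v' s = E' l * ?v' s" if l: "l \<noteq> \<mu>" for l
  proof -
    have "(l - \<mu>) * mvec ?C (Dop N \<eta> \<xi> l) ?v' s = (l - \<mu>) * mvec ?C (mmul ?C (Dop N \<eta> \<xi> l) (Bop N \<eta> \<xi> \<mu>)) v s"
      by (simp add: mvec_mmul finite_cfgs)
    also have "\<dots> = (\<Sum>u\<in>?C. ((l - \<mu>) * mmul ?C (Dop N \<eta> \<xi> l) (Bop N \<eta> \<xi> \<mu>) s u) * v u)"
      by (simp add: mvec_def sum_distrib_left mult_ac)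
    also have "\<dots> = (\<Sum>u\<in>?C. ((l - \<mu> + \<eta>) * mmul ?C (Bop N \<eta> \<xi> \<mu>) (Dop N \<eta> \<xi> l) s u
          - \<eta> * mmul ?C (Bop N \<eta> \<xi> l) (Dop N \<eta> \<xi> \<mu>) s u) * v u)"
      by (intro sum.cong refl) (simp add: rel_DB s)
    also have "\<dots> = (l - \<mu> + \<eta>) * mvec ?C (mmul ?C (Bop N \<eta> \<xi> \<mu>) (Dop N \<eta> \<xi> l)) v s
          - \<eta> * mvec ?C (mmul ?C (Bop N \<eta> \<xi> l) (Dop N \<eta> \<xi> \<mu>)) v s"
      by (simp add: mvec_def sum_distrib_left sum_subtractf left_diff_distrib right_diff_distrib mult_ac)
    also have "\<dots> = (l - \<mu> + \<eta>) * mvec ?C (Bop N \<eta> \<xi> \<mu>) (mvec ?C (Dop N \<eta> \<xi> l) v) s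
          - \<eta> * mvec ?C (Bop N \<eta> \<xi> l) (mvec ?C (Dop N \<eta> \<xi> \<mu>) v) s"
      by (simp add: mvec_mmul finite_cfgs)
    also have "\<dots> = (l - \<mu> + \<eta>) * (E l * ?v' s) - \<eta> * (E \<mu> * mvec ?C (Bop N \<eta> \<xi> l) v s)"
      by (simp add: keig_apply[OF eig])
    also have "\<dots> = (l - \<mu>) * (E' l * ?v' s)"
    proof -
      have e: "(l - \<mu> + \<eta>) * E l = (l - \<mu>) * E' l" using E'[of l] by (simp add: mult.commute)
      show ?thesis using e E0 by (simp add: mult.assoc[symmetric])
    qed
    finally show ?thesis using l by simp
  qed
  show "mvec ?C (Dop N \<eta> \<xi> l) ?v' s = E' l * ?v' s"
  proof (cases "l = \<mu>")
    case False thus ?thesis by (rule main)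
  next
    case True
    have "(\<lambda>l. mvec ?C (Dop N \<eta> \<xi> l) ?v' s) \<mu> = (\<lambda>l. E' l * ?v' s) \<mu>"
    proof (rule cont_eq_point[where f = "\<lambda>l. mvec ?C (Dop N \<eta> \<xi> l) ?v' s" and g = "\<lambda>l. E' l * ?v' s"])
      show "isCont (\<lambda>l. mvec ?C (Dop N \<eta> \<xi> l) ?v' s) \<mu>"
        unfolding mvec_def[of ?C "Dop N \<eta> \<xi> _"] by (intro continuous_intros Dop_cont)
      show "isCont (\<lambda>l. E' l * ?v' s) \<mu>" by (intro continuous_intros cE')
    qed (rule main)
    thus ?thesis using True by simp
  qed
qed



lemma beig_cong: "(\<And>t. t \<in> cfgs N \<Longrightarrow> w t = w' t) \<Longrightarrow> beig N \<eta> \<xi> w E \<Longrightarrow> beig N \<eta> \<xi> w' E"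
  unfolding beig_def vecm_def by simp

lemma keig_cong: "(\<And>t. t \<in> cfgs N \<Longrightarrow> w t = w' t) \<Longrightarrow> keig N \<eta> \<xi> w E \<Longrightarrow> keig N \<eta> \<xi> w' E"
  unfolding keig_def mvec_def by simp

lemma beig_scale: "beig N \<eta> \<xi> w E \<Longrightarrow> beig N \<eta> \<xi> (\<lambda>t. w t / c) E"
  unfolding beig_def vecm_def by (simp add: sum_divide_distrib[symmetric])

lemma keig_scale: "keig N \<eta> \<xi> w E \<Longrightarrow> keig N \<eta> \<xi> (\<lambda>t. w t / c) E"
  unfolding keig_def mvec_def by (simp add: sum_divide_distrib[symmetric])

lemma prod_split_at:
  fixes f g :: "nat \<Rightarrow> complex"
  assumes "x \<in> {1..N}" "\<And>a. a \<in> {1..N} \<Longrightarrow> a \<noteq> x \<Longrightarrow> f a = g a"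
  shows "(\<Prod>a\<in>{1..N}. f a) * g x = (\<Prod>a\<in>{1..N}. g a) * f x"
proof -
  have "(\<Prod>a\<in>{1..N}. f a) = f x * (\<Prod>a\<in>{1..N} - {x}. f a)" using assms(1) by (simp add: prod.remove)
  moreover have "(\<Prod>a\<in>{1..N}. g a) = g x * (\<Prod>a\<in>{1..N} - {x}. g a)" using assms(1) by (simp add: prod.remove)
  moreover have "(\<Prod>a\<in>{1..N} - {x}. f a) = (\<Prod>a\<in>{1..N} - {x}. g a)" using assms(2) by (intro prod.cong) auto
  ultimately show ?thesis by simp
qed

lemma bra_ind:
  assumes h: "h \<in> cfgs N"
  shows "j \<le> N \<Longrightarrow> beig N \<eta> \<xi> (vecm (cfgs N) vac (oprod (cfgs N)
      (\<lambda>n. if h n = 1 then (\<lambda>u v. Cop N \<eta> \<xi> (\<xi> n) u v / dfun N \<xi> (\<xi> n - \<eta>)) else idm) j))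
      (\<lambda>l. \<Prod>a\<in>{1..N}. l - \<xi> a + (if a \<le> j then of_nat (h a) * \<eta> else 0))"
proof (induction j)
  case 0
  have "beig N \<eta> \<xi> vac (\<lambda>l. \<Prod>a\<in>{1..N}. l - \<xi> a + (if a \<le> 0 then of_nat (h a) * \<eta> else 0))"
    unfolding beig_def using vac_bra_eig by (auto simp: dfun_def)
  thus ?case by (rule beig_cong[rotated]) (simp add: vecm_idm finite_cfgs)
next
  case (Suc j)
  let ?F = "\<lambda>n. if h n = 1 then (\<lambda>u v. Cop N \<eta> \<xi> (\<xi> n) u v / dfun N \<xi> (\<xi> n - \<eta>)) else idm"
  let ?w = "vecm (cfgs N) vac (oprod (cfgs N) ?F j)"
  let ?E = "\<lambda>l. \<Prod>a\<in>{1..N}. l - \<xi> a + (if a \<le> j then of_nat (h a) * \<eta> else 0)"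
  let ?E' = "\<lambda>l. \<Prod>a\<in>{1..N}. l - \<xi> a + (if a \<le> Suc j then of_nat (h a) * \<eta> else 0)"
  have IH: "beig N \<eta> \<xi> ?w ?E" using Suc by simp
  have x: "Suc j \<in> {1..N}" using Suc.prems by simp
  have eq: "vecm (cfgs N) vac (oprod (cfgs N) ?F (Suc j)) = vecm (cfgs N) ?w (?F (Suc j))"
    by (simp add: vecm_mmul finite_cfgs)
  show ?case
  proof (cases "h (Suc j) = 1")
    case True
    have eq2: "vecm (cfgs N) ?w (?F (Suc j)) = (\<lambda>t. vecm (cfgs N) ?w (Cop N \<eta> \<xi> (\<xi> (Suc j))) t / dfun N \<xi> (\<xi> (Suc j) - \<eta>))"
      using True by (simp add: vecm_def sum_divide_distrib fun_eq_iff)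
    have "beig N \<eta> \<xi> (vecm (cfgs N) ?w (Cop N \<eta> \<xi> (\<xi> (Suc j)))) ?E'"
    proof (rule bra_step[OF IH])
      show "?E (\<xi> (Suc j)) = 0" using x by (auto intro!: bexI[of _ "Suc j"])
      show "isCont ?E' (\<xi> (Suc j))" by (intro continuous_intros)
      fix l
      show "?E' l * (l - \<xi> (Suc j)) = ?E l * (l - \<xi> (Suc j) + \<eta>)"
        using prod_split_at[OF x, of "\<lambda>a. l - \<xi> a + (if a \<le> Suc j then of_nat (h a) * \<eta> else 0)"
                                    "\<lambda>a. l - \<xi> a + (if a \<le> j then of_nat (h a) * \<eta> else 0)"] True
        by (auto simp: le_Suc_eq)
    qed
    thus ?thesis unfolding eq eq2 by (rule beig_scale)
  next
    case False
    have E: "?E' = ?E" using False cfgs_le[OF h, of "Suc j"]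
      by (intro ext prod.cong refl) (auto simp: le_Suc_eq)
    show ?thesis unfolding eq E using False
      by (intro beig_cong[OF _ IH]) (simp add: vecm_idm finite_cfgs)
  qed
qed

lemma ket_ind:
  assumes h: "h \<in> cfgs N"
  shows "j \<le> N \<Longrightarrow> keig N \<eta> \<xi> v (\<lambda>l. \<Prod>a\<in>{1..N}. l - \<xi> a + (if j < a then of_nat (h a) * \<eta> else 0)) \<Longrightarrow>
    keig N \<eta> \<xi> (mvec (cfgs N) (oprod (cfgs N)
      (\<lambda>n. if h n = 1 then (\<lambda>u v. Bop N \<eta> \<xi> (\<xi> n) u v / afun N \<eta> \<xi> (\<xi> n)) else idm) j) v)
      (\<lambda>l. \<Prod>a\<in>{1..N}. l - \<xi> a + of_nat (h a) * \<eta>)"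
proof (induction j arbitrary: v)
  case 0
  have E: "(\<lambda>l. \<Prod>a\<in>{1..N}. l - \<xi> a + (if 0 < a then of_nat (h a) * \<eta> else 0)) = (\<lambda>l. \<Prod>a\<in>{1..N}. l - \<xi> a + of_nat (h a) * \<eta>)"
    by (intro ext prod.cong refl) auto
  show ?case using 0(2) unfolding E by (rule keig_cong[rotated]) (simp add: mvec_idm finite_cfgs)
next
  case (Suc j)
  let ?F = "\<lambda>n. if h n = 1 then (\<lambda>u v. Bop N \<eta> \<xi> (\<xi> n) u v / afun N \<eta> \<xi> (\<xi> n)) else idm"
  let ?E = "\<lambda>l. \<Prod>a\<in>{1..N}. l - \<xi> a + (if Suc j < a then of_nat (h a) * \<eta> else 0)"
  let ?E' = "\<lambda>l. \<Prod>a\<in>{1..N}. l - \<xi> a + (if j < a then of_nat (h a) * \<eta> else 0)"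
  have x: "Suc j \<in> {1..N}" using Suc.prems by simp
  have eq: "mvec (cfgs N) (oprod (cfgs N) ?F (Suc j)) v = mvec (cfgs N) (oprod (cfgs N) ?F j) (mvec (cfgs N) (?F (Suc j)) v)"
    by (simp add: mvec_mmul finite_cfgs)
  have "keig N \<eta> \<xi> (mvec (cfgs N) (?F (Suc j)) v) ?E'"
  proof (cases "h (Suc j) = 1")
    case True
    have eq2: "mvec (cfgs N) (?F (Suc j)) v = (\<lambda>t. mvec (cfgs N) (Bop N \<eta> \<xi> (\<xi> (Suc j))) v t / afun N \<eta> \<xi> (\<xi> (Suc j)))"
      using True by (simp add: mvec_def sum_divide_distrib fun_eq_iff)
    have "keig N \<eta> \<xi> (mvec (cfgs N) (Bop N \<eta> \<xi> (\<xi> (Suc j))) v) ?E'"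
    proof (rule ket_step[OF Suc.prems(2)])
      show "?E (\<xi> (Suc j)) = 0" using x by (auto intro!: bexI[of _ "Suc j"])
      show "isCont ?E' (\<xi> (Suc j))" by (intro continuous_intros)
      fix l
      show "?E' l * (l - \<xi> (Suc j)) = ?E l * (l - \<xi> (Suc j) + \<eta>)"
        using prod_split_at[OF x, of "\<lambda>a. l - \<xi> a + (if j < a then of_nat (h a) * \<eta> else 0)"
                                    "\<lambda>a. l - \<xi> a + (if Suc j < a then of_nat (h a) * \<eta> else 0)"] True
        by (auto simp: less_Suc_eq)
    qed
    thus ?thesis unfolding eq2 by (rule keig_scale)
  next
    case False
    have h0: "h (Suc j) = 0" using False cfgs_le[OF h, of "Suc j"] by auto
    have pt: "(if j < a then of_nat (h a) * \<eta> else 0) = (if Suc j < a then of_nat (h a) * \<eta> else (0::complex))" for a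
      by (cases "a = Suc j") (auto simp: h0)
    have E: "?E' = ?E" by (intro ext prod.cong refl) (simp only: pt)
    show ?thesis unfolding E using False
      by (intro keig_cong[OF _ Suc.prems(2)]) (simp add: mvec_idm finite_cfgs)
  qed
  thus ?case unfolding eq using Suc.IH Suc.prems by simp
qed

definition eh where "eh N \<eta> \<xi> h = (\<lambda>l. \<Prod>a\<in>{1..N}. l - \<xi> a + of_nat (h a) * \<eta>)"

lemma bra_h_eig: "h \<in> cfgs N \<Longrightarrow> beig N \<eta> \<xi> (bra_h N \<eta> \<xi> h) (eh N \<eta> \<xi> h)"
proof -
  assume h: "h \<in> cfgs N"
  have E: "(\<lambda>l. \<Prod>a\<in>{1..N}. l - \<xi> a + (if a \<le> N then of_nat (h a) * \<eta> else 0)) = eh N \<eta> \<xi> h"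
    by (auto simp: eh_def intro!: ext prod.cong)
  show ?thesis unfolding bra_h_def using bra_ind[OF h, of N \<eta> \<xi>] unfolding E by (intro beig_scale) simp
qed

lemma ket_h_eig: "h \<in> cfgs N \<Longrightarrow> keig N \<eta> \<xi> (ket_h N \<eta> \<xi> h) (eh N \<eta> \<xi> h)"
proof -
  assume h: "h \<in> cfgs N"
  have E: "(\<lambda>l. \<Prod>a\<in>{1..N}. l - \<xi> a + (if N < a then of_nat (h a) * \<eta> else 0)) = dfun N \<xi>"
    by (auto simp: dfun_def intro!: ext prod.cong)
  have v: "keig N \<eta> \<xi> vac (dfun N \<xi>)" unfolding keig_def using vac_ket_eig by auto
  show ?thesis unfolding ket_h_def eh_def using ket_ind[OF h, of N \<eta> \<xi> vac] v unfolding E by (intro keig_scale) simp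
qed

lemma beig_oprod: "beig N \<eta> \<xi> w E \<Longrightarrow> t \<in> cfgs N \<Longrightarrow>
  vecm (cfgs N) w (oprod (cfgs N) (\<lambda>k. Dop N \<eta> \<xi> (\<alpha>k k)) R) t = (\<Prod>k\<in>{1..R}. E (\<alpha>k k)) * w t"
proof (induction R arbitrary: t)
  case 0 thus ?case by (simp add: vecm_idm finite_cfgs)
next
  case (Suc R)
  have "vecm (cfgs N) w (oprod (cfgs N) (\<lambda>k. Dop N \<eta> \<xi> (\<alpha>k k)) (Suc R)) t
      = vecm (cfgs N) (vecm (cfgs N) w (oprod (cfgs N) (\<lambda>k. Dop N \<eta> \<xi> (\<alpha>k k)) R)) (Dop N \<eta> \<xi> (\<alpha>k (Suc R))) t"
    by (simp add: vecm_mmul finite_cfgs)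
  also have "\<dots> = (\<Prod>k\<in>{1..R}. E (\<alpha>k k)) * vecm (cfgs N) w (Dop N \<eta> \<xi> (\<alpha>k (Suc R))) t"
    by (rule vecm_const) (rule Suc.IH[OF Suc.prems(1)])
  also have "\<dots> = (\<Prod>k\<in>{1..Suc R}. E (\<alpha>k k)) * w t"
    using Suc.prems by (simp add: beig_def prod.nat_ivl_Suc' mult_ac)
  finally show ?case .
qed

lemma keig_oprod: "keig N \<eta> \<xi> v E \<Longrightarrow> s \<in> cfgs N \<Longrightarrow>
  mvec (cfgs N) (oprod (cfgs N) (\<lambda>k. Dop N \<eta> \<xi> (\<alpha>k k)) R) v s = (\<Prod>k\<in>{1..R}. E (\<alpha>k k)) * v s"
proof (induction R arbitrary: s)
  case 0 thus ?case by (simp add: mvec_idm finite_cfgs)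
next
  case (Suc R)
  have "mvec (cfgs N) (oprod (cfgs N) (\<lambda>k. Dop N \<eta> \<xi> (\<alpha>k k)) (Suc R)) v s
      = mvec (cfgs N) (oprod (cfgs N) (\<lambda>k. Dop N \<eta> \<xi> (\<alpha>k k)) R) (mvec (cfgs N) (Dop N \<eta> \<xi> (\<alpha>k (Suc R))) v) s"
    by (simp add: mvec_mmul finite_cfgs)
  also have "\<dots> = E (\<alpha>k (Suc R)) * mvec (cfgs N) (oprod (cfgs N) (\<lambda>k. Dop N \<eta> \<xi> (\<alpha>k k)) R) v s"
    by (rule mvec_const) (use Suc.prems in \<open>simp add: keig_def\<close>)
  also have "\<dots> = (\<Prod>k\<in>{1..Suc R}. E (\<alpha>k k)) * v s"
    using Suc.IH[OF Suc.prems] by (simp add: prod.nat_ivl_Suc' mult_ac)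
  finally show ?case .
qed

lemma coef_identity:
  fixes \<xi> \<alpha>k :: "nat \<Rightarrow> complex" and \<eta> :: complex and h :: "nat \<Rightarrow> nat"
  shows
  "(\<Prod>a\<in>{1..N}. \<Prod>k\<in>{1..R}. \<xi> a - of_nat (h a) * \<eta> - \<alpha>k k)
     = (-1) ^ (R * N) * (\<Prod>k\<in>{1..R}. eh N \<eta> \<xi> h (\<alpha>k k))"
proof -
  have "(\<Prod>a\<in>{1..N}. \<Prod>k\<in>{1..R}. \<xi> a - of_nat (h a) * \<eta> - \<alpha>k k)
      = (\<Prod>a\<in>{1..N}. \<Prod>k\<in>{1..R}. (-1) * (\<alpha>k k - \<xi> a + of_nat (h a) * \<eta>))"
  proof (intro prod.cong refl)
    fix a k
    show "\<xi> a - of_nat (h a) * \<eta> - \<alpha>k k = (-1) * (\<alpha>k k - \<xi> a + of_nat (h a) * \<eta>)"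
      by algebra
  qed
  also have "\<dots> = (\<Prod>a\<in>{1..N}. (-1) ^ R * (\<Prod>k\<in>{1..R}. \<alpha>k k - \<xi> a + of_nat (h a) * \<eta>))"
    by (intro prod.cong refl) (subst prod.distrib, simp)
  also have "\<dots> = ((-1) ^ R) ^ N * (\<Prod>a\<in>{1..N}. \<Prod>k\<in>{1..R}. \<alpha>k k - \<xi> a + of_nat (h a) * \<eta>)"
    by (subst prod.distrib) simp
  also have "\<dots> = (-1) ^ (R * N) * (\<Prod>k\<in>{1..R}. eh N \<eta> \<xi> h (\<alpha>k k))"
    unfolding power_mult eh_def by (subst prod.swap) (rule refl)
  finally show ?thesis .
qed

lemma vecm_sum: "vecm I (\<lambda>t. \<Sum>h\<in>H. c h * b h t) X t = (\<Sum>h\<in>H. c h * vecm I (b h) X t)"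
  unfolding vecm_def by (simp add: sum_distrib_left sum_distrib_right mult_ac) (rule sum.swap)

lemma mvec_sum: "mvec I X (\<lambda>t. \<Sum>h\<in>H. c h * b h t) s = (\<Sum>h\<in>H. c h * mvec I X (b h) s)"
  unfolding mvec_def by (simp add: sum_distrib_left sum_distrib_right mult_ac) (rule sum.swap)

theorem proposition1:
  fixes N R :: nat and \<eta> :: complex and \<xi> \<alpha>k :: "nat \<Rightarrow> complex"
  assumes "N \<ge> 1" and "\<eta> \<noteq> 0"
    and "\<forall>a\<in>{1..N}. \<forall>b\<in>{1..N}. a \<noteq> b \<longrightarrow>
           \<xi> a \<noteq> \<xi> b \<and> \<xi> a \<noteq> \<xi> b + \<eta> \<and> \<xi> a \<noteq> \<xi> b - \<eta>"
  shows "(\<forall>t\<in>cfgs N. sep_bra N \<eta> \<xi> (\<lambda>x. \<Prod>k\<in>{1..R}. x - \<alpha>k k) t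
           = (-1) ^ (R * N) * vecm (cfgs N) (sep_bra N \<eta> \<xi> (\<lambda>_. 1))
               (oprod (cfgs N) (\<lambda>k. Dop N \<eta> \<xi> (\<alpha>k k)) R) t)
     \<and> (\<forall>s\<in>cfgs N. sep_ket N \<eta> \<xi> (\<lambda>x. \<Prod>k\<in>{1..R}. x - \<alpha>k k) s
           = (-1) ^ (R * N) * mvec (cfgs N)
               (oprod (cfgs N) (\<lambda>k. Dop N \<eta> \<xi> (\<alpha>k k)) R) (sep_ket N \<eta> \<xi> (\<lambda>_. 1)) s)"
proof (intro conjI ballI)
  fix t assume t: "t \<in> cfgs N"
  have "(-1) ^ (R * N) * vecm (cfgs N) (sep_bra N \<eta> \<xi> (\<lambda>_. 1)) (oprod (cfgs N) (\<lambda>k. Dop N \<eta> \<xi> (\<alpha>k k)) R) t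
     = (-1) ^ (R * N) * (\<Sum>h\<in>cfgs N. vand N (\<lambda>a. \<xi> a - of_nat (h a) * \<eta>) *
          vecm (cfgs N) (bra_h N \<eta> \<xi> h) (oprod (cfgs N) (\<lambda>k. Dop N \<eta> \<xi> (\<alpha>k k)) R) t)"
    unfolding sep_bra_def by (simp add: vecm_sum)
  also have "\<dots> = (\<Sum>h\<in>cfgs N. (-1) ^ (R * N) * (\<Prod>k\<in>{1..R}. eh N \<eta> \<xi> h (\<alpha>k k)) *
          vand N (\<lambda>a. \<xi> a - of_nat (h a) * \<eta>) * bra_h N \<eta> \<xi> h t)"
    unfolding sum_distrib_left
  proof (intro sum.cong refl)
    fix h assume h: "h \<in> cfgs N"
    show "(-1) ^ (R * N) * (vand N (\<lambda>a. \<xi> a - of_nat (h a) * \<eta>) *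
          vecm (cfgs N) (bra_h N \<eta> \<xi> h) (oprod (cfgs N) (\<lambda>k. Dop N \<eta> \<xi> (\<alpha>k k)) R) t) =
          (-1) ^ (R * N) * (\<Prod>k\<in>{1..R}. eh N \<eta> \<xi> h (\<alpha>k k)) *
          vand N (\<lambda>a. \<xi> a - of_nat (h a) * \<eta>) * bra_h N \<eta> \<xi> h t"
      using beig_oprod[OF bra_h_eig[OF h] t, where \<alpha>k=\<alpha>k and R=R] by (simp add: mult_ac)
  qed
  also have "\<dots> = sep_bra N \<eta> \<xi> (\<lambda>x. \<Prod>k\<in>{1..R}. x - \<alpha>k k) t"
    unfolding sep_bra_def by (intro sum.cong refl) (simp only: coef_identity)
  finally show "sep_bra N \<eta> \<xi> (\<lambda>x. \<Prod>k\<in>{1..R}. x - \<alpha>k k) t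
           = (-1) ^ (R * N) * vecm (cfgs N) (sep_bra N \<eta> \<xi> (\<lambda>_. 1))
               (oprod (cfgs N) (\<lambda>k. Dop N \<eta> \<xi> (\<alpha>k k)) R) t" by simp
next
  fix s assume s: "s \<in> cfgs N"
  have "(-1) ^ (R * N) * mvec (cfgs N) (oprod (cfgs N) (\<lambda>k. Dop N \<eta> \<xi> (\<alpha>k k)) R) (sep_ket N \<eta> \<xi> (\<lambda>_. 1)) s
     = (-1) ^ (R * N) * (\<Sum>h\<in>cfgs N. vand N (\<lambda>a. \<xi> a + of_nat (h a) * \<eta>) *
          mvec (cfgs N) (oprod (cfgs N) (\<lambda>k. Dop N \<eta> \<xi> (\<alpha>k k)) R) (ket_h N \<eta> \<xi> h) s)"
    unfolding sep_ket_def by (simp add: mvec_sum)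
  also have "\<dots> = (\<Sum>h\<in>cfgs N. (-1) ^ (R * N) * (\<Prod>k\<in>{1..R}. eh N \<eta> \<xi> h (\<alpha>k k)) *
          vand N (\<lambda>a. \<xi> a + of_nat (h a) * \<eta>) * ket_h N \<eta> \<xi> h s)"
    unfolding sum_distrib_left
  proof (intro sum.cong refl)
    fix h assume h: "h \<in> cfgs N"
    show "(-1) ^ (R * N) * (vand N (\<lambda>a. \<xi> a + of_nat (h a) * \<eta>) *
          mvec (cfgs N) (oprod (cfgs N) (\<lambda>k. Dop N \<eta> \<xi> (\<alpha>k k)) R) (ket_h N \<eta> \<xi> h) s) =
          (-1) ^ (R * N) * (\<Prod>k\<in>{1..R}. eh N \<eta> \<xi> h (\<alpha>k k)) *
          vand N (\<lambda>a. \<xi> a + of_nat (h a) * \<eta>) * ket_h N \<eta> \<xi> h s"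
      using keig_oprod[OF ket_h_eig[OF h] s, where \<alpha>k=\<alpha>k and R=R] by (simp add: mult_ac)
  qed
  also have "\<dots> = sep_ket N \<eta> \<xi> (\<lambda>x. \<Prod>k\<in>{1..R}. x - \<alpha>k k) s"
    unfolding sep_ket_def by (intro sum.cong refl) (simp only: coef_identity)
  finally show "sep_ket N \<eta> \<xi> (\<lambda>x. \<Prod>k\<in>{1..R}. x - \<alpha>k k) s
           = (-1) ^ (R * N) * mvec (cfgs N)
               (oprod (cfgs N) (\<lambda>k. Dop N \<eta> \<xi> (\<alpha>k k)) R) (sep_ket N \<eta> \<xi> (\<lambda>_. 1)) s" by simp
qed


end
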